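(* Let $\varepsilon>0$, $\delta\in(0,1)$, $T\in\mathbb{R}$, and let $\{f_i\}_{i\in\mathbb{N}}$ be real-valued queries on datasets that are each 1-sensitive (i.e. $|f_i(D)-f_i(D')|\le 1$ for neighboring $D,D'$) and have unidirectional sensitivity: for all neighboring datasets $D,D'$, if $f_i(D)>f_i(D')$ for some $i$, then there is no $j$ with $f_j(D)<f_j(D')$. Let $q$ be the $\left(1-\frac{\delta}{2(1+e^{\varepsilon})}\right)$-quantile of $\mathrm{Lap}(2/\varepsilon)$. Consider StrictUDSAboveThreshold: on input $D$, sample $\hat T\gets T+\mathrm{Lap}(2/\varepsilon)-2q$; then for $i=1,2,\dots$, sample a fresh $\nu_i\sim\mathrm{Lap}(2/\varepsilon)$; if $f_i(D)\ge T$ or $f_i(D)+\nu_i\ge\hat T$, output $a_i=\top$ and halt; otherwise output $a_i=\bot$ and continue. Then StrictUDSAboveThreshold (whose output is the stream $a_1,a_2,\dots$) is $(\varepsilon,\delta)$-differentially private.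
   Context: $\mathrm{Lap}(b)$ is the Laplace distribution with mean $0$ and scale $b$, density $\frac{1}{2b}e^{-|x|/b}$; all Laplace samples are independent. The $\phi$-quantile of a distribution is the value $x$ with $\Pr[X\le x]=\phi$. Two datasets are neighboring if they differ by replacing the contribution of one individual. A randomized algorithm $M$ is $(\varepsilon,\delta)$-differentially private if for every pair of neighboring datasets $D,D'$ and every set of outcomes $S$, $\Pr[M(D)\in S]\le e^{\varepsilon}\Pr[M(D')\in S]+\delta$ and symmetrically with $D,D'$ swapped. *)

theory Defs
  imports "HOL-Probability.Probability"
begin

definition laplace :: "real \<Rightarrow> real measure" where
  "laplace b = density lborel (\<lambda>x. ennreal (exp (- \<bar>x\<bar> / b) / (2 * b)))"

definition diff_private ::
  "real \<Rightarrow> real \<Rightarrow> ('d \<Rightarrow> 'd \<Rightarrow> bool) \<Rightarrow> ('d \<Rightarrow> 'o measure) \<Rightarrow> bool" where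
  "diff_private eps delta nbr M \<longleftrightarrow>
     (\<forall>D D'. nbr D D' \<longrightarrow>
        (\<forall>S \<in> sets (M D). measure (M D) S \<le> exp eps * measure (M D') S + delta) \<and>
        (\<forall>S \<in> sets (M D'). measure (M D') S \<le> exp eps * measure (M D) S + delta))"

text \<open>The halting index of StrictUDSAboveThreshold on dataset D, given the threshold
  noise z and the query noises nu: the output stream is bot,...,bot,top with top at
  position i (Some i), or the infinite all-bot stream (None).\<close>
definition strict_uds_halt ::
  "(nat \<Rightarrow> 'd \<Rightarrow> real) \<Rightarrow> real \<Rightarrow> real \<Rightarrow> 'd \<Rightarrow> real \<Rightarrow> (nat \<Rightarrow> real) \<Rightarrow> nat option" where
  "strict_uds_halt f T q D z nu =
     (let P = (\<lambda>i. f i D \<ge> T \<or> f i D + nu i \<ge> T + z - 2 * q)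
      in if \<exists>i. P i then Some (LEAST i. P i) else None)"

definition strict_uds_above_threshold ::
  "real \<Rightarrow> (nat \<Rightarrow> 'd \<Rightarrow> real) \<Rightarrow> real \<Rightarrow> real \<Rightarrow> 'd \<Rightarrow> nat option measure" where
  "strict_uds_above_threshold eps f T q D =
     distr (laplace (2 / eps) \<Otimes>\<^sub>M (\<Pi>\<^sub>M i\<in>(UNIV :: nat set). laplace (2 / eps)))
           (count_space UNIV)
           (\<lambda>(z, nu). strict_uds_halt f T q D z nu)"

end

theory Submission
  imports Defs
begin


lemma sets_laplace[measurable_cong]: "sets (laplace b) = sets borel"
  by (simp add: laplace_def)

lemma space_laplace[simp]: "space (laplace b) = UNIV"
  by (simp add: laplace_def)

lemma aux: "0 \<le> a \<Longrightarrow> 0 \<le> c \<Longrightarrow> ennreal (a/2 + c/2) = ennreal (1/2) * ennreal a + ennreal (1/2) * ennreal c"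
proof -
  assume "0 \<le> a" "0 \<le> c"
  then have "ennreal (a/2 + c/2) = ennreal ((1/2) * a) + ennreal ((1/2) * c)"
    by (subst ennreal_plus[symmetric]) auto
  also have "\<dots> = ennreal (1/2) * ennreal a + ennreal (1/2) * ennreal c"
    using \<open>0 \<le> a\<close> \<open>0 \<le> c\<close> by (simp only: ennreal_mult)
  finally show ?thesis .
qed

lemma laplace_prob:
  assumes b: "b > 0"
  shows "prob_space (laplace b)"
proof
  define l where "l = 1 / b"
  have l: "l > 0" using b by (simp add: l_def)
  have e1: "(\<integral>\<^sup>+x. ennreal (exponential_density l x) \<partial>lborel) = 1"
  proof -
    interpret prob_space "density lborel (exponential_density l)"
      using prob_space_exponential_density[OF l] .
    show ?thesis using emeasure_space_1 by (simp add: emeasure_density)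
  qed
  have e2: "(\<integral>\<^sup>+x. ennreal (exponential_density l (- x)) \<partial>lborel) = 1"
    using nn_integral_real_affine[of "\<lambda>x. ennreal (exponential_density l x)" "-1" 0] e1
    by simp
  have ae: "AE x in lborel. ennreal (exp (- \<bar>x\<bar> / b) / (2 * b)) =
     ennreal (exponential_density l x / 2 + exponential_density l (- x) / 2)"
    using AE_lborel_singleton[of 0]
  proof eventually_elim
    case (elim x)
    show ?case
    proof (cases "x < 0")
      case True
      then show ?thesis using b
        by (simp add: exponential_density_def l_def field_simps)
    next
      case False
      with elim have "x > 0" by simp
      then show ?thesis using b
        by (simp add: exponential_density_def l_def field_simps)
    qed
  qed
  have nn: "\<And>x. exponential_density l x \<ge> 0" using l by (simp add: exponential_density_def)
  have "emeasure (laplace b) (space (laplace b)) =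
     (\<integral>\<^sup>+x. ennreal (exp (- \<bar>x\<bar> / b) / (2 * b)) \<partial>lborel)"
    by (simp add: laplace_def emeasure_density)
  also have "\<dots> = (\<integral>\<^sup>+x. ennreal (exponential_density l x / 2 + exponential_density l (- x) / 2) \<partial>lborel)"
    by (rule nn_integral_cong_AE[OF ae])
  also have "\<dots> = (\<integral>\<^sup>+x. ennreal (1/2) * ennreal (exponential_density l x) + ennreal (1/2) * ennreal (exponential_density l (- x)) \<partial>lborel)"
    by (intro nn_integral_cong aux nn)
  also have "\<dots> = ennreal (1/2) * 1 + ennreal (1/2) * 1"
    by (subst nn_integral_add) (auto simp: nn_integral_cmult e1 e2)
  also have "\<dots> = 1"
    by (simp only: mult_1_right, subst ennreal_plus[symmetric]) auto
  finally show "emeasure (laplace b) (space (laplace b)) = 1" .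
qed

lemma lap_dens_shift:
  fixes b y c :: real
  assumes b: "b > 0"
  shows "exp (- \<bar>y - c\<bar> / b) / (2 * b) \<le> exp (\<bar>c\<bar> / b) * (exp (- \<bar>y\<bar> / b) / (2 * b))"
proof -
  have "- \<bar>y - c\<bar> \<le> \<bar>c\<bar> + - \<bar>y\<bar>" using abs_triangle_ineq2[of y c] by linarith
  then have "- \<bar>y - c\<bar> / b \<le> \<bar>c\<bar> / b + - \<bar>y\<bar> / b"
    using b by (simp add: field_simps)
  then have "exp (- \<bar>y - c\<bar> / b) \<le> exp (\<bar>c\<bar> / b) * exp (- \<bar>y\<bar> / b)"
    by (simp add: exp_add[symmetric])
  then show ?thesis using b by (simp add: divide_right_mono)
qed

lemma laplace_shift:
  assumes b: "b > 0" and G[measurable]: "G \<in> borel_measurable borel"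
  shows "(\<integral>\<^sup>+x. G (x + c) \<partial>laplace b) \<le> ennreal (exp (\<bar>c\<bar>/b)) * (\<integral>\<^sup>+x. G x \<partial>laplace b)"
proof -
  let ?p = "\<lambda>x. exp (- \<bar>x\<bar> / b) / (2*b)"
  have "(\<integral>\<^sup>+x. G (x + c) \<partial>laplace b) = (\<integral>\<^sup>+x. ennreal (?p x) * G (x + c) \<partial>lborel)"
    by (simp add: laplace_def nn_integral_density)
  also have "\<dots> = (\<integral>\<^sup>+y. ennreal (?p (y - c)) * G y \<partial>lborel)"
    using nn_integral_real_affine[of "\<lambda>y. ennreal (?p (y - c)) * G y" 1 c] by (simp add: add.commute)
  also have "\<dots> \<le> (\<integral>\<^sup>+y. ennreal (exp(\<bar>c\<bar>/b)) * (ennreal (?p y) * G y) \<partial>lborel)"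
  proof (intro nn_integral_mono)
    fix y
    have "ennreal (?p (y - c)) \<le> ennreal (exp(\<bar>c\<bar>/b)) * ennreal (?p y)"
    proof -
      have "ennreal (?p (y - c)) \<le> ennreal (exp(\<bar>c\<bar>/b) * ?p y)"
        by (rule ennreal_leI) (rule lap_dens_shift[OF b])
      also have "\<dots> = ennreal (exp(\<bar>c\<bar>/b)) * ennreal (?p y)"
        by (rule ennreal_mult) (use b in auto)
      finally show ?thesis .
    qed
    then show "ennreal (?p (y - c)) * G y \<le> ennreal (exp(\<bar>c\<bar>/b)) * (ennreal (?p y) * G y)"
      by (metis mult.assoc mult_right_mono zero_le)
  qed
  also have "\<dots> = ennreal (exp (\<bar>c\<bar>/b)) * (\<integral>\<^sup>+ x. G x \<partial>laplace b)"
    by (simp add: nn_integral_cmult laplace_def nn_integral_density)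
  finally show ?thesis .
qed

lemma laplace_reflect:
  "emeasure (laplace b) {..< - q} = emeasure (laplace b) {q<..}"
proof -
  let ?p = "\<lambda>x. exp (- \<bar>x\<bar> / b) / (2*b)"
  have "emeasure (laplace b) {..< - q} = (\<integral>\<^sup>+x. ennreal (?p x) * indicator {..< - q} x \<partial>lborel)"
    by (simp add: laplace_def emeasure_density)
  also have "\<dots> = (\<integral>\<^sup>+x. ennreal (?p (- x)) * indicator {..< - q} (- x) \<partial>lborel)"
    using nn_integral_real_affine[of "\<lambda>x. ennreal (?p x) * indicator {..< - q} x" "-1" 0] by simp
  also have "\<dots> = (\<integral>\<^sup>+x. ennreal (?p x) * indicator {q<..} x \<partial>lborel)"
    by (intro nn_integral_cong) (simp split: split_indicator)
  also have "\<dots> = emeasure (laplace b) {q<..}"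
    by (simp add: laplace_def emeasure_density)
  finally show ?thesis .
qed

abbreviation LS :: "real \<Rightarrow> (nat \<Rightarrow> real) measure" where
  "LS b \<equiv> \<Pi>\<^sub>M i\<in>(UNIV :: nat set). laplace b"

lemma space_LS[simp]: "space (LS b) = UNIV"
  by (simp add: space_PiM)

lemma seqspace:
  assumes b: "b > 0"
  shows "sequence_space (laplace b)"
proof -
  interpret prob_space "laplace b" using laplace_prob[OF b] .
  show ?thesis by unfold_locales
qed

lemma measurable_shift_LS[measurable]:
  "(\<lambda>X. X(k := X k + c)) \<in> measurable (LS b) (LS b)"
proof (rule measurable_PiM_single')
  fix i :: nat
  show "(\<lambda>X. (X(k := X k + c)) i) \<in> measurable (LS b) (laplace b)"
  proof (cases "i = k")
    case True
    then show ?thesis by simp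
  next
    case False
    then show ?thesis by simp
  qed
qed (simp add: space_PiM)

lemma seq_decomp:
  assumes b: "b > 0" and g[measurable]: "g \<in> borel_measurable (LS b)"
  shows "(\<integral>\<^sup>+X. g X \<partial>LS b) = (\<integral>\<^sup>+s. (\<integral>\<^sup>+w. g (case_nat s w) \<partial>LS b) \<partial>laplace b)"
proof -
  interpret S: sequence_space "laplace b" using seqspace[OF b] .
  interpret P: pair_sigma_finite "laplace b" "LS b" ..
  have "(\<integral>\<^sup>+X. g X \<partial>LS b) = (\<integral>\<^sup>+X. g X \<partial>distr (laplace b \<Otimes>\<^sub>M LS b) (LS b) (\<lambda>(s, w). case_nat s w))"
    by (simp add: S.PiM_iter)
  also have "\<dots> = (\<integral>\<^sup>+x. g (case_nat (fst x) (snd x)) \<partial>(laplace b \<Otimes>\<^sub>M LS b))"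
    by (subst nn_integral_distr) (auto simp: split_beta')
  also have "\<dots> = (\<integral>\<^sup>+s. (\<integral>\<^sup>+w. g (case_nat s w) \<partial>LS b) \<partial>laplace b)"
    by (subst S.nn_integral_fst[symmetric]) auto
  finally show ?thesis .
qed

lemma seq_shift:
  assumes b: "b > 0" and F: "F \<in> borel_measurable (LS b)"
  shows "(\<integral>\<^sup>+X. F (X(k := X k + c)) \<partial>LS b) \<le> ennreal (exp (\<bar>c\<bar>/b)) * (\<integral>\<^sup>+X. F X \<partial>LS b)"
  using F
proof (induction k arbitrary: F)
  case 0
  note [measurable] = 0
  interpret S: sequence_space "laplace b" using seqspace[OF b] .
  define H where "H s = (\<integral>\<^sup>+w. F (case_nat s w) \<partial>LS b)" for s
  have Hm: "H \<in> borel_measurable borel"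
  proof -
    have "H \<in> borel_measurable (laplace b)" unfolding H_def by measurable
    then show ?thesis by (simp cong: measurable_cong_sets)
  qed
  have eq: "\<And>s w. (case_nat s w)(0 := s + c) = case_nat (s + c) w"
    by (rule ext) (simp split: nat.split)
  have "(\<integral>\<^sup>+X. F (X(0 := X 0 + c)) \<partial>LS b) = (\<integral>\<^sup>+s. H (s + c) \<partial>laplace b)"
    by (subst seq_decomp[OF b]) (simp_all add: eq H_def)
  also have "\<dots> \<le> ennreal (exp (\<bar>c\<bar>/b)) * (\<integral>\<^sup>+s. H s \<partial>laplace b)"
    by (rule laplace_shift[OF b Hm])
  also have "(\<integral>\<^sup>+s. H s \<partial>laplace b) = (\<integral>\<^sup>+X. F X \<partial>LS b)"
    unfolding H_def by (subst seq_decomp[OF b]) simp_all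
  finally show ?case .
next
  case (Suc k)
  note [measurable] = Suc.prems
  interpret S: sequence_space "laplace b" using seqspace[OF b] .
  have eq: "\<And>s w. (case_nat s w)(Suc k := w k + c) = case_nat s (w(k := w k + c))"
    by (rule ext) (simp split: nat.split)
  have "(\<integral>\<^sup>+X. F (X(Suc k := X (Suc k) + c)) \<partial>LS b) =
     (\<integral>\<^sup>+s. (\<integral>\<^sup>+w. F (case_nat s (w(k := w k + c))) \<partial>LS b) \<partial>laplace b)"
    by (subst seq_decomp[OF b]) (simp_all add: eq)
  also have "\<dots> \<le> (\<integral>\<^sup>+s. ennreal (exp (\<bar>c\<bar>/b)) * (\<integral>\<^sup>+w. F (case_nat s w) \<partial>LS b) \<partial>laplace b)"
    by (intro nn_integral_mono Suc.IH) measurable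
  also have "\<dots> = ennreal (exp (\<bar>c\<bar>/b)) * (\<integral>\<^sup>+s. (\<integral>\<^sup>+w. F (case_nat s w) \<partial>LS b) \<partial>laplace b)"
    by (rule nn_integral_cmult) measurable
  also have "(\<integral>\<^sup>+s. (\<integral>\<^sup>+w. F (case_nat s w) \<partial>LS b) \<partial>laplace b) = (\<integral>\<^sup>+X. F X \<partial>LS b)"
    by (subst seq_decomp[OF b]) simp_all
  finally show ?case .
qed

abbreviation LM :: "real \<Rightarrow> (real \<times> (nat \<Rightarrow> real)) measure" where
  "LM b \<equiv> laplace b \<Otimes>\<^sub>M LS b"

lemma space_LM[simp]: "space (LM b) = UNIV"
  by (simp add: space_pair_measure)

lemma pair_shift:
  assumes b: "b > 0" and F[measurable]: "F \<in> borel_measurable (LM b)"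
  shows "(\<integral>\<^sup>+x. F (fst x + a, (snd x)(k := snd x k + c)) \<partial>LM b)
     \<le> ennreal (exp (\<bar>a\<bar>/b)) * ennreal (exp (\<bar>c\<bar>/b)) * (\<integral>\<^sup>+x. F x \<partial>LM b)"
proof -
  interpret S: sequence_space "laplace b" using seqspace[OF b] .
  interpret P: pair_sigma_finite "laplace b" "LS b" ..
  define H where "H z = (\<integral>\<^sup>+w. F (z, w) \<partial>LS b)" for z
  have Hm: "H \<in> borel_measurable borel"
  proof -
    have "H \<in> borel_measurable (laplace b)" unfolding H_def by measurable
    then show ?thesis by (simp cong: measurable_cong_sets)
  qed
  have "(\<integral>\<^sup>+x. F (fst x + a, (snd x)(k := snd x k + c)) \<partial>LM b) =
      (\<integral>\<^sup>+z. (\<integral>\<^sup>+w. F (z + a, w(k := w k + c)) \<partial>LS b) \<partial>laplace b)"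
    by (subst S.nn_integral_fst[symmetric]) auto
  also have "\<dots> \<le> (\<integral>\<^sup>+z. ennreal (exp (\<bar>c\<bar>/b)) * H (z + a) \<partial>laplace b)"
    unfolding H_def by (intro nn_integral_mono seq_shift[OF b]) measurable
  also have "\<dots> = ennreal (exp (\<bar>c\<bar>/b)) * (\<integral>\<^sup>+z. H (z + a) \<partial>laplace b)"
    by (rule nn_integral_cmult) (use Hm in \<open>simp cong: measurable_cong_sets\<close>)
  also have "\<dots> \<le> ennreal (exp (\<bar>c\<bar>/b)) * (ennreal (exp (\<bar>a\<bar>/b)) * (\<integral>\<^sup>+z. H z \<partial>laplace b))"
    by (intro mult_left_mono laplace_shift[OF b Hm]) simp
  also have "(\<integral>\<^sup>+z. H z \<partial>laplace b) = (\<integral>\<^sup>+x. F x \<partial>LM b)"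
    unfolding H_def by (subst S.nn_integral_fst[symmetric]) auto
  finally show ?thesis by (simp only: ac_simps)
qed

lemma coupling:
  assumes b: "b > 0" and A[measurable]: "A \<in> sets (LM b)"
  shows "emeasure (LM b) {x. (fst x + a, (snd x)(k := snd x k + c)) \<in> A}
     \<le> ennreal (exp ((\<bar>a\<bar> + \<bar>c\<bar>)/b)) * emeasure (LM b) A"
proof -
  have m: "(\<lambda>x. (fst x + a, (snd x)(k := snd x k + c))) \<in> measurable (LM b) (LM b)"
    by measurable
  have set: "{x. (fst x + a, (snd x)(k := snd x k + c)) \<in> A} = (\<lambda>x. (fst x + a, (snd x)(k := snd x k + c))) -` A \<inter> space (LM b)"
    by auto
  have sA: "{x. (fst x + a, (snd x)(k := snd x k + c)) \<in> A} \<in> sets (LM b)"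
    unfolding set by (rule measurable_sets[OF m A])
  have "emeasure (LM b) {x. (fst x + a, (snd x)(k := snd x k + c)) \<in> A}
      = (\<integral>\<^sup>+x. indicator A (fst x + a, (snd x)(k := snd x k + c)) \<partial>LM b)"
    by (subst nn_integral_indicator[OF sA, symmetric]) (auto intro!: nn_integral_cong split: split_indicator)
  also have "\<dots> \<le> ennreal (exp (\<bar>a\<bar>/b)) * ennreal (exp (\<bar>c\<bar>/b)) * (\<integral>\<^sup>+x. indicator A x \<partial>LM b)"
    by (rule pair_shift[OF b]) measurable
  also have "\<dots> = ennreal (exp ((\<bar>a\<bar> + \<bar>c\<bar>)/b)) * emeasure (LM b) A"
    by (simp add: ennreal_mult[symmetric] exp_add[symmetric] add_divide_distrib)
  finally show ?thesis .
qed


lemma LM_prob: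
  assumes b: "b > 0"
  shows "prob_space (LM b)"
proof -
  interpret S: sequence_space "laplace b" using seqspace[OF b] .
  interpret L: prob_space "laplace b" using laplace_prob[OF b] .
  interpret P: pair_prob_space "laplace b" "LS b" ..
  show ?thesis by (rule P.prob_space_axioms)
qed

lemma meas_snd_i[measurable]: "(\<lambda>x. snd x i) \<in> borel_measurable (LM b)"
proof -
  have "(\<lambda>x. snd x i) \<in> measurable (LM b) (laplace b)" by measurable
  then show ?thesis by (simp cong: measurable_cong_sets)
qed
lemma meas_fst[measurable]: "(\<lambda>x. fst x) \<in> borel_measurable (LM b)"
proof -
  have "(\<lambda>x. fst x) \<in> measurable (LM b) (laplace b)" by measurable
  then show ?thesis by (simp cong: measurable_cong_sets)
qed

definition PP :: "(nat \<Rightarrow> real) \<Rightarrow> real \<Rightarrow> real \<Rightarrow> real \<Rightarrow> (nat \<Rightarrow> real) \<Rightarrow> nat \<Rightarrow> bool" where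
  "PP v T q z nu i \<longleftrightarrow> v i \<ge> T \<or> v i + nu i \<ge> T + z - 2 * q"

definition hh :: "(nat \<Rightarrow> real) \<Rightarrow> real \<Rightarrow> real \<Rightarrow> real \<Rightarrow> (nat \<Rightarrow> real) \<Rightarrow> nat option" where
  "hh v T q z nu = (if \<exists>i. PP v T q z nu i then Some (LEAST i. PP v T q z nu i) else None)"

lemma strict_uds_halt_hh: "strict_uds_halt f T q D z nu = hh (\<lambda>i. f i D) T q z nu"
  by (simp add: strict_uds_halt_def hh_def PP_def Let_def)

lemma hh_Some: "hh v T q z nu = Some k \<longleftrightarrow> PP v T q z nu k \<and> (\<forall>i<k. \<not> PP v T q z nu i)"
proof
  assume h: "hh v T q z nu = Some k"
  then have ex: "\<exists>i. PP v T q z nu i" by (auto simp: hh_def split: if_splits)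
  with h have k: "k = (LEAST i. PP v T q z nu i)" by (simp add: hh_def)
  show "PP v T q z nu k \<and> (\<forall>i<k. \<not> PP v T q z nu i)"
    using ex unfolding k by (metis LeastI not_less_Least)
next
  assume a: "PP v T q z nu k \<and> (\<forall>i<k. \<not> PP v T q z nu i)"
  then have "(LEAST i. PP v T q z nu i) = k"
    by (intro Least_equality) (auto simp: not_less[symmetric])
  with a show "hh v T q z nu = Some k" by (auto simp: hh_def)
qed

lemma hh_None: "hh v T q z nu = None \<longleftrightarrow> (\<forall>i. \<not> PP v T q z nu i)"
  by (simp add: hh_def)

lemma hh_cases: "(\<exists>k. hh v T q z nu = Some k) \<or> hh v T q z nu = None"
  by (cases "hh v T q z nu") auto

lemma sets_hh_eq[measurable]:
  "{x. hh v T q (fst x) (snd x) = y} \<in> sets (LM b)"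
proof (cases y)
  case None
  have "{x. hh v T q (fst x) (snd x) = y} = {x \<in> space (LM b). \<forall>i. \<not> (v i \<ge> T \<or> v i + snd x i \<ge> T + fst x - 2 * q)}"
    by (auto simp: None hh_None PP_def)
  also have "\<dots> \<in> sets (LM b)" by measurable
  finally show ?thesis .
next
  case (Some k)
  have "{x. hh v T q (fst x) (snd x) = y} = {x \<in> space (LM b). (v k \<ge> T \<or> v k + snd x k \<ge> T + fst x - 2 * q) \<and>
       (\<forall>i<k. \<not> (v i \<ge> T \<or> v i + snd x i \<ge> T + fst x - 2 * q))}"
    by (auto simp: Some hh_Some PP_def)
  also have "\<dots> \<in> sets (LM b)" by measurable
  finally show ?thesis .
qed

lemma measurable_hh[measurable]:
  "(\<lambda>x. hh v T q (fst x) (snd x)) \<in> measurable (LM b) (count_space UNIV)"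
proof (subst measurable_count_space_eq2_countable, intro conjI ballI)
  fix y :: "nat option"
  have "(\<lambda>x. hh v T q (fst x) (snd x)) -` {y} \<inter> space (LM b) = {x. hh v T q (fst x) (snd x) = y}"
    by auto
  then show "(\<lambda>x. hh v T q (fst x) (snd x)) -` {y} \<inter> space (LM b) \<in> sets (LM b)"
    using sets_hh_eq by simp
qed simp

lemma sets_hh_in[measurable]:
  "{x. hh v T q (fst x) (snd x) \<in> A} \<in> sets (LM b)"
proof -
  have "{x. hh v T q (fst x) (snd x) \<in> A} = (\<lambda>x. hh v T q (fst x) (snd x)) -` A \<inter> space (LM b)"
    by auto
  also have "\<dots> \<in> sets (LM b)" by (rule measurable_sets[OF measurable_hh]) simp
  finally show ?thesis .
qed

definition mu :: "real \<Rightarrow> (nat \<Rightarrow> real) \<Rightarrow> real \<Rightarrow> real \<Rightarrow> nat option measure" where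
  "mu b v T q = distr (LM b) (count_space UNIV) (\<lambda>x. hh v T q (fst x) (snd x))"

lemma sets_mu[simp]: "sets (mu b v T q) = UNIV"
  by (simp add: mu_def)

lemma emeasure_mu: "emeasure (mu b v T q) A = emeasure (LM b) {x. hh v T q (fst x) (snd x) \<in> A}"
  unfolding mu_def by (subst emeasure_distr) (auto intro!: arg_cong[where f="emeasure (LM b)"])

lemma dom_sum:
  fixes N1 N2 :: "nat option measure"
  assumes s1: "sets N1 = UNIV" and s2: "sets N2 = UNIV"
    and le: "\<And>y. y \<in> A \<Longrightarrow> emeasure N1 {y} \<le> K * emeasure N2 {y}"
  shows "emeasure N1 A \<le> K * emeasure N2 A"
proof -
  have "emeasure N1 A = (\<integral>\<^sup>+y. emeasure N1 {y} \<partial>count_space A)"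
    by (rule emeasure_countable_singleton) (auto simp: s1)
  also have "\<dots> \<le> (\<integral>\<^sup>+y. K * emeasure N2 {y} \<partial>count_space A)"
    by (intro nn_integral_mono le) simp
  also have "\<dots> = K * (\<integral>\<^sup>+y. emeasure N2 {y} \<partial>count_space A)"
    by (rule nn_integral_cmult) simp
  also have "(\<integral>\<^sup>+y. emeasure N2 {y} \<partial>count_space A) = emeasure N2 A"
    by (rule emeasure_countable_singleton[symmetric]) (auto simp: s2)
  finally show ?thesis .
qed

lemma coup_point:
  assumes b: "b > 0"
    and imp: "\<And>z nu. hh v1 T q z nu = y \<Longrightarrow> hh v2 T q (z + a) (nu(k := nu k + c)) = y"
  shows "emeasure (mu b v1 T q) {y} \<le> ennreal (exp ((\<bar>a\<bar> + \<bar>c\<bar>)/b)) * emeasure (mu b v2 T q) {y}"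
proof -
  have "emeasure (mu b v1 T q) {y} = emeasure (LM b) {x. hh v1 T q (fst x) (snd x) = y}"
    by (simp add: emeasure_mu)
  also have "\<dots> \<le> emeasure (LM b) {x. (fst x + a, (snd x)(k := snd x k + c)) \<in> {x. hh v2 T q (fst x) (snd x) = y}}"
  proof (rule emeasure_mono)
    show "{x. hh v1 T q (fst x) (snd x) = y} \<subseteq> {x. (fst x + a, (snd x)(k := snd x k + c)) \<in> {x. hh v2 T q (fst x) (snd x) = y}}"
      using imp by force
    have m: "(\<lambda>x. (fst x + a, (snd x)(k := snd x k + c))) \<in> measurable (LM b) (LM b)"
      by measurable
    have "{x. (fst x + a, (snd x)(k := snd x k + c)) \<in> {x. hh v2 T q (fst x) (snd x) = y}} =
       (\<lambda>x. (fst x + a, (snd x)(k := snd x k + c))) -` {x. hh v2 T q (fst x) (snd x) = y} \<inter> space (LM b)"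
      by auto
    also have "\<dots> \<in> sets (LM b)"
      by (rule measurable_sets[OF m sets_hh_eq])
    finally show "{x. (fst x + a, (snd x)(k := snd x k + c)) \<in> {x. hh v2 T q (fst x) (snd x) = y}} \<in> sets (LM b)" .
  qed
  also have "\<dots> \<le> ennreal (exp ((\<bar>a\<bar> + \<bar>c\<bar>)/b)) * emeasure (LM b) {x. hh v2 T q (fst x) (snd x) = y}"
    by (rule coupling[OF b]) measurable
  also have "emeasure (LM b) {x. hh v2 T q (fst x) (snd x) = y} = emeasure (mu b v2 T q) {y}"
    by (simp add: emeasure_mu)
  finally show ?thesis .
qed



lemma sets_Collect_LM[measurable (raw)]:
  "Measurable.pred (LM b) P \<Longrightarrow> {x. P x} \<in> sets (LM b)"
proof -
  assume [measurable]: "Measurable.pred (LM b) P"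
  have "{x \<in> space (LM b). P x} \<in> sets (LM b)" by measurable
  then show ?thesis by simp
qed

lemma bad_bound:
  assumes eps: "eps > 0" and b: "b = 2/eps" and d: "0 < delta"
    and quant: "measure (laplace b) {..q} = 1 - delta/(2*(1+exp eps))"
  shows "emeasure (LM b) {x. snd x j - fst x < 1 - 2*q} \<le> ennreal delta"
proof -
  have b0: "b > 0" using eps b by simp
  interpret S: sequence_space "laplace b" using seqspace[OF b0] .
  interpret L: prob_space "laplace b" using laplace_prob[OF b0] .
  interpret P: pair_prob_space "laplace b" "LS b" ..
  have LSp: "prob_space (LS b)" by (rule prob_space_PiM) (rule laplace_prob[OF b0])
  have sp1: "emeasure (LS b) UNIV = 1" using prob_space.emeasure_space_1[OF LSp] by simp
  have sp2: "emeasure (laplace b) UNIV = 1" using prob_space.emeasure_space_1[OF laplace_prob[OF b0]] by simp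
  note Times = sigma_finite_measure.emeasure_pair_measure_Times[OF prob_space_imp_sigma_finite[OF LSp]]
  define d0 where "d0 = delta/(2*(1+exp eps))"
  have d00: "d0 \<ge> 0" using d by (simp add: d0_def add_pos_pos less_imp_le)
  have tail: "emeasure (laplace b) {q<..} = ennreal d0"
  proof -
    have "{q<..} = space (laplace b) - {..q}" by auto
    then have "measure (laplace b) {q<..} = 1 - measure (laplace b) {..q}"
      using prob_space.prob_compl[OF laplace_prob[OF b0], of "{..q}"] by simp
    then show ?thesis by (simp add: finite_measure.emeasure_eq_measure[OF prob_space.finite_measure[OF laplace_prob[OF b0]]] quant d0_def)
  qed
  have m1: "emeasure (LM b) {x. fst x \<in> {q<..}} = ennreal d0"
  proof -
    have "{x. fst x \<in> {q<..}} = {q<..} \<times> space (LS b)" by auto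
    moreover have "emeasure (LM b) ({q<..} \<times> space (LS b)) = emeasure (laplace b) {q<..} * emeasure (LS b) (space (LS b))"
      by (rule Times) measurable
    ultimately have "emeasure (LM b) {x. fst x \<in> {q<..}} = emeasure (laplace b) {q<..} * emeasure (LS b) (space (LS b))"
      by simp
    then show ?thesis by (simp add: tail sp1)
  qed
  have m3: "emeasure (LM b) {x. snd x j < - q} = ennreal d0"
  proof -
    have "{x. snd x j < - q} = space (laplace b) \<times> {w \<in> space (LS b). w j \<in> {..< -q}}" by auto
    moreover have "emeasure (LM b) (space (laplace b) \<times> {w \<in> space (LS b). w j \<in> {..< -q}}) = emeasure (laplace b) (space (laplace b)) * emeasure (LS b) {w \<in> space (LS b). w j \<in> {..< -q}}"
      by (rule Times) measurable
    ultimately have "emeasure (LM b) {x. snd x j < - q} = emeasure (laplace b) (space (laplace b)) * emeasure (LS b) {w \<in> space (LS b). w j \<in> {..< -q}}"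
      by simp
    also have "\<dots> = emeasure (laplace b) {..< -q}"
      using S.emeasure_PiM_Collect_single[of j "{..< -q}"] by (simp add: sp2)
    also have "\<dots> = ennreal d0" by (simp add: laplace_reflect tail)
    finally show ?thesis .
  qed
  have m2: "emeasure (LM b) {x. snd x j < 1 - q} \<le> ennreal (exp (eps/2)) * ennreal d0"
  proof -
    have eqs: "{x. snd x j < 1 - q} = {x. (fst x + 0, (snd x)(j := snd x j + (-1))) \<in> {x. snd x j < - q}}" by auto
    have "emeasure (LM b) {x. snd x j < 1 - q} \<le> ennreal (exp ((\<bar>0\<bar> + \<bar>-1\<bar>)/b)) * emeasure (LM b) {x. snd x j < - q}"
      unfolding eqs by (rule coupling[OF b0]) measurable
    also have "(\<bar>0\<bar> + \<bar>-1\<bar>)/b = eps/2" using b eps by simp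
    finally show ?thesis by (simp add: m3)
  qed
  have "emeasure (LM b) {x. snd x j - fst x < 1 - 2*q} \<le> emeasure (LM b) ({x. fst x \<in> {q<..}} \<union> {x. snd x j < 1 - q})"
    by (rule emeasure_mono) (auto, measurable)
  also have "\<dots> \<le> emeasure (LM b) {x. fst x \<in> {q<..}} + emeasure (LM b) {x. snd x j < 1 - q}"
    by (rule emeasure_subadditive) measurable
  also have "\<dots> \<le> ennreal d0 + ennreal (exp (eps/2)) * ennreal d0"
    using m1 m2 by (intro add_mono) auto
  also have "\<dots> = ennreal (d0 + exp (eps/2) * d0)"
    using d00 by (simp add: ennreal_mult ennreal_plus)
  also have "\<dots> \<le> ennreal delta"
  proof (rule ennreal_leI)
    have "exp (eps/2) \<le> exp eps" using eps by simp
    then have "1 + exp (eps/2) \<le> 2*(1+exp eps)" using exp_gt_zero[of eps] by (smt (verit))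
    then have "delta * (1 + exp (eps/2)) \<le> delta * (2*(1+exp eps))"
      using d by (intro mult_left_mono) auto
    then have "delta * (1 + exp (eps/2)) / (2*(1+exp eps)) \<le> delta"
      by (simp add: divide_le_eq add_pos_pos)
    moreover have "d0 + exp (eps/2) * d0 = delta * (1 + exp (eps/2)) / (2*(1+exp eps))"
      unfolding d0_def by (simp add: add_divide_distrib distrib_left)
    ultimately show "d0 + exp (eps/2) * d0 \<le> delta"
      by simp
  qed
  finally show ?thesis .
qed



lemma imp1_Some:
  assumes m1: "\<And>i. lo i \<le> hi i" and m2: "\<And>i. hi i \<le> lo i + 1"
    and g: "\<forall>i<k. hi i < T" and h: "hh lo T q z nu = Some k"
  shows "hh hi T q (z + 1) (nu(k := nu k + (1 - (hi k - lo k)))) = Some k"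
proof -
  from h have P: "PP lo T q z nu k" and N: "\<forall>i<k. \<not> PP lo T q z nu i" by (auto simp: hh_Some)
  show ?thesis unfolding hh_Some
  proof (intro conjI allI impI)
    show "PP hi T q (z + 1) (nu(k := nu k + (1 - (hi k - lo k)))) k"
      using P m1[of k] by (auto simp: PP_def)
    fix i assume i: "i < k"
    then have "i \<noteq> k" by simp
    then show "\<not> PP hi T q (z + 1) (nu(k := nu k + (1 - (hi k - lo k)))) i"
      using N i m2[of i] g by (auto simp: PP_def)
  qed
qed

lemma imp1_None:
  assumes m1: "\<And>i. lo i \<le> hi i" and m2: "\<And>i. hi i \<le> lo i + 1"
    and g: "\<forall>i. hi i < T" and h: "hh lo T q z nu = None"
  shows "hh hi T q (z + 1) (nu(0 := nu 0 + 0)) = None"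
proof -
  have "\<not> PP hi T q (z + 1) (nu(0 := nu 0 + 0)) i" for i
  proof -
    from h have "\<not> PP lo T q z nu i" by (simp add: hh_None)
    then show ?thesis using g[rule_format, of i] m2[of i] by (auto simp: PP_def)
  qed
  then show ?thesis by (simp add: hh_None)
qed

lemma imp2_Some:
  assumes m1: "\<And>i. lo i \<le> hi i" and m2: "\<And>i. hi i \<le> lo i + 1"
    and g: "\<forall>i\<le>k. hi i < T" and h: "hh hi T q z nu = Some k"
  shows "hh lo T q (z + 0) (nu(k := nu k + (hi k - lo k))) = Some k"
proof -
  from h have P: "PP hi T q z nu k" and N: "\<forall>i<k. \<not> PP hi T q z nu i" by (auto simp: hh_Some)
  show ?thesis unfolding hh_Some
  proof (intro conjI allI impI)
    show "PP lo T q (z + 0) (nu(k := nu k + (hi k - lo k))) k"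
      using P g by (auto simp: PP_def)
    fix i assume i: "i < k"
    then have "i \<noteq> k" by simp
    then show "\<not> PP lo T q (z + 0) (nu(k := nu k + (hi k - lo k))) i"
      using N i m1[of i] by (auto simp: PP_def)
  qed
qed

lemma imp2_None:
  assumes m1: "\<And>i. lo i \<le> hi i" and h: "hh hi T q z nu = None"
  shows "hh lo T q (z + 0) (nu(0 := nu 0 + 0)) = None"
proof -
  have "\<not> PP lo T q (z + 0) (nu(0 := nu 0 + 0)) i" for i
  proof -
    from h have "\<not> PP hi T q z nu i" by (simp add: hh_None)
    then show ?thesis using m1[of i] by (auto simp: PP_def)
  qed
  then show ?thesis by (simp add: hh_None)
qed



lemma cost_le:
  assumes eps: "eps > 0" and b: "b = 2/eps" and ac: "\<bar>a\<bar> + \<bar>c\<bar> \<le> 2"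
  shows "ennreal (exp ((\<bar>a\<bar> + \<bar>c\<bar>)/b)) \<le> ennreal (exp eps)"
proof (rule ennreal_leI)
  have "(\<bar>a\<bar> + \<bar>c\<bar>)/b = (\<bar>a\<bar> + \<bar>c\<bar>) * eps / 2" using b eps by simp
  also have "\<dots> \<le> 2 * eps / 2" using ac eps by (intro divide_right_mono mult_right_mono) auto
  finally show "exp ((\<bar>a\<bar> + \<bar>c\<bar>)/b) \<le> exp eps" by simp
qed

lemma core1:
  assumes eps: "eps > 0" and b: "b = 2/eps" and d: "0 < delta"
    and quant: "measure (laplace b) {..q} = 1 - delta/(2*(1+exp eps))"
    and m1: "\<And>i. lo i \<le> hi i" and m2: "\<And>i. hi i \<le> lo i + 1"
  shows "emeasure (mu b lo T q) A \<le> ennreal (exp eps) * emeasure (mu b hi T q) A + ennreal delta"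
proof -
  have b0: "b > 0" using eps b by simp
  define G where "G = {y. case y of Some k \<Rightarrow> (\<forall>i<k. hi i < T) | None \<Rightarrow> (\<forall>i. hi i < T)}"
  have good: "emeasure (mu b lo T q) {y} \<le> ennreal (exp eps) * emeasure (mu b hi T q) {y}"
    if y: "y \<in> G" for y
  proof (cases y)
    case None
    with y have g: "\<forall>i. hi i < T" by (simp add: G_def)
    have "emeasure (mu b lo T q) {y} \<le> ennreal (exp ((\<bar>1\<bar> + \<bar>0\<bar>)/b)) * emeasure (mu b hi T q) {y}"
      by (rule coup_point[OF b0]) (use imp1_None[OF m1 m2 g] None in auto)
    also have "\<dots> \<le> ennreal (exp eps) * emeasure (mu b hi T q) {y}"
      by (intro mult_right_mono cost_le[OF eps b]) auto
    finally show ?thesis .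
  next
    case (Some k)
    with y have g: "\<forall>i<k. hi i < T" by (simp add: G_def)
    have "emeasure (mu b lo T q) {y} \<le> ennreal (exp ((\<bar>1\<bar> + \<bar>1 - (hi k - lo k)\<bar>)/b)) * emeasure (mu b hi T q) {y}"
      by (rule coup_point[OF b0]) (use imp1_Some[OF m1 m2 g] Some in auto)
    also have "\<dots> \<le> ennreal (exp eps) * emeasure (mu b hi T q) {y}"
      using m1[of k] m2[of k] by (intro mult_right_mono cost_le[OF eps b]) auto
    finally show ?thesis .
  qed
  have badpart: "emeasure (LM b) {x. hh lo T q (fst x) (snd x) \<in> UNIV - G} \<le> ennreal delta"
  proof (cases "\<exists>i. T \<le> hi i")
    case True
    define j where "j = (LEAST i. T \<le> hi i)"
    have hj: "T \<le> hi j" unfolding j_def using True by (metis LeastI)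
    have lj: "hi i < T" if "i < j" for i
      using not_less_Least[of i "\<lambda>i. T \<le> hi i"] that unfolding j_def by simp
    have "{x. hh lo T q (fst x) (snd x) \<in> UNIV - G} \<subseteq> {x. snd x j - fst x < 1 - 2*q}"
    proof (intro subsetI CollectI)
      fix x :: "real \<times> (nat \<Rightarrow> real)"
      assume "x \<in> {x. hh lo T q (fst x) (snd x) \<in> UNIV - G}"
      then have nG: "hh lo T q (fst x) (snd x) \<notin> G" by simp
      have np: "\<not> PP lo T q (fst x) (snd x) j"
      proof (cases "hh lo T q (fst x) (snd x)")
        case None
        then show ?thesis by (simp add: hh_None)
      next
        case (Some k)
        with nG obtain i where "i < k" "\<not> hi i < T" by (auto simp: G_def)
        then have "j \<le> i" unfolding j_def using Least_le[of "\<lambda>i. T \<le> hi i" i] by simp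
        with \<open>i < k\<close> have "j < k" by simp
        with Some show ?thesis by (simp add: hh_Some)
      qed
      then show "snd x j - fst x < 1 - 2*q"
        using hj m2[of j] by (auto simp: PP_def)
    qed
    then have "emeasure (LM b) {x. hh lo T q (fst x) (snd x) \<in> UNIV - G} \<le> emeasure (LM b) {x. snd x j - fst x < 1 - 2*q}"
      by (rule emeasure_mono) measurable
    also have "\<dots> \<le> ennreal delta" by (rule bad_bound[OF eps b d quant])
    finally show ?thesis .
  next
    case False
    then have "\<forall>i. hi i < T" by (simp add: not_le)
    then have "{x. hh lo T q (fst x) (snd x) \<in> UNIV - G} = {}"
      by (auto simp: G_def split: option.splits)
    then show ?thesis by simp
  qed
  have "emeasure (mu b lo T q) A \<le> emeasure (mu b lo T q) (A \<inter> G) + emeasure (mu b lo T q) (A - G)"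
    using emeasure_subadditive[of "A \<inter> G" "mu b lo T q" "A - G"] by (simp add: Int_Diff_Un)
  also have "emeasure (mu b lo T q) (A \<inter> G) \<le> ennreal (exp eps) * emeasure (mu b hi T q) (A \<inter> G)"
    by (rule dom_sum) (auto intro: good)
  also have "\<dots> \<le> ennreal (exp eps) * emeasure (mu b hi T q) A"
    by (intro mult_left_mono emeasure_mono) auto
  also have "emeasure (mu b lo T q) (A - G) \<le> ennreal delta"
  proof -
    have "emeasure (mu b lo T q) (A - G) = emeasure (LM b) {x. hh lo T q (fst x) (snd x) \<in> A - G}"
      by (rule emeasure_mu)
    also have "\<dots> \<le> emeasure (LM b) {x. hh lo T q (fst x) (snd x) \<in> UNIV - G}"
      by (rule emeasure_mono) (auto simp: sets_hh_in)
    finally show ?thesis using badpart by simp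
  qed
  finally show ?thesis by (simp add: add_mono)
qed



lemma core2:
  assumes eps: "eps > 0" and b: "b = 2/eps" and d: "0 < delta"
    and quant: "measure (laplace b) {..q} = 1 - delta/(2*(1+exp eps))"
    and m1: "\<And>i. lo i \<le> hi i" and m2: "\<And>i. hi i \<le> lo i + 1"
  shows "emeasure (mu b hi T q) A \<le> ennreal (exp eps) * emeasure (mu b lo T q) A + ennreal delta"
proof -
  have b0: "b > 0" using eps b by simp
  define G where "G = {y. case y of Some k \<Rightarrow> (\<forall>i\<le>k. hi i < T) | None \<Rightarrow> True}"
  have good: "emeasure (mu b hi T q) {y} \<le> ennreal (exp eps) * emeasure (mu b lo T q) {y}"
    if y: "y \<in> G" for y
  proof (cases y)
    case None
    have "emeasure (mu b hi T q) {y} \<le> ennreal (exp ((\<bar>0\<bar> + \<bar>0\<bar>)/b)) * emeasure (mu b lo T q) {y}"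
      by (rule coup_point[OF b0]) (use imp2_None[OF m1] None in auto)
    also have "\<dots> \<le> ennreal (exp eps) * emeasure (mu b lo T q) {y}"
      by (intro mult_right_mono cost_le[OF eps b]) auto
    finally show ?thesis .
  next
    case (Some k)
    with y have g: "\<forall>i\<le>k. hi i < T" by (simp add: G_def)
    have "emeasure (mu b hi T q) {y} \<le> ennreal (exp ((\<bar>0\<bar> + \<bar>hi k - lo k\<bar>)/b)) * emeasure (mu b lo T q) {y}"
      by (rule coup_point[OF b0]) (use imp2_Some[OF m1 m2 g] Some in auto)
    also have "\<dots> \<le> ennreal (exp eps) * emeasure (mu b lo T q) {y}"
      using m1[of k] m2[of k] by (intro mult_right_mono cost_le[OF eps b]) auto
    finally show ?thesis .
  qed
  have rest: "emeasure (LM b) {x. hh hi T q (fst x) (snd x) \<in> A - G}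
      \<le> emeasure (LM b) {x. hh lo T q (fst x) (snd x) \<in> A - G} + ennreal delta"
  proof (cases "\<exists>i. T \<le> hi i")
    case True
    define j where "j = (LEAST i. T \<le> hi i)"
    have hj: "T \<le> hi j" unfolding j_def using True by (metis LeastI)
    have lj: "hi i < T" if "i < j" for i
      using not_less_Least[of i "\<lambda>i. T \<le> hi i"] that unfolding j_def by simp
    have "{x. hh hi T q (fst x) (snd x) \<in> A - G} \<subseteq>
        {x. hh lo T q (fst x) (snd x) \<in> A - G} \<union> {x. snd x j - fst x < 1 - 2*q}"
    proof (intro subsetI)
      fix x :: "real \<times> (nat \<Rightarrow> real)"
      assume "x \<in> {x. hh hi T q (fst x) (snd x) \<in> A - G}"
      then have xA: "hh hi T q (fst x) (snd x) \<in> A" and nG: "hh hi T q (fst x) (snd x) \<notin> G" by auto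
      obtain k where hk: "hh hi T q (fst x) (snd x) = Some k"
        using nG by (cases "hh hi T q (fst x) (snd x)") (auto simp: G_def)
      then have Pk: "PP hi T q (fst x) (snd x) k" and Nk: "\<forall>i<k. \<not> PP hi T q (fst x) (snd x) i"
        by (auto simp: hh_Some)
      from nG hk obtain i where i: "i \<le> k" "\<not> hi i < T" by (auto simp: G_def)
      have hiltk: "hi i < T" if "i < k" for i
        using Nk that by (auto simp: PP_def)
      have "i = k" using i hiltk by (meson le_neq_implies_less)
      with i have hkT: "T \<le> hi k" by simp
      have "j \<le> k" unfolding j_def using Least_le[of "\<lambda>i. T \<le> hi i" k] hkT by simp
      moreover have "\<not> j < k" using hiltk hj by (meson not_le)
      ultimately have jk: "j = k" by simp
      have Nlo: "\<forall>i<k. \<not> PP lo T q (fst x) (snd x) i"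
      proof (intro allI impI)
        fix i assume "i < k"
        then have "\<not> PP hi T q (fst x) (snd x) i" using Nk by simp
        then show "\<not> PP lo T q (fst x) (snd x) i" using m1[of i] by (auto simp: PP_def)
      qed
      show "x \<in> {x. hh lo T q (fst x) (snd x) \<in> A - G} \<union> {x. snd x j - fst x < 1 - 2*q}"
      proof (cases "PP lo T q (fst x) (snd x) k")
        case True
        then have "hh lo T q (fst x) (snd x) = Some k" using Nlo by (simp add: hh_Some)
        then show ?thesis using xA nG hk by simp
      next
        case False
        then have "snd x j - fst x < 1 - 2*q" using hkT m2[of k] jk by (auto simp: PP_def)
        then show ?thesis by simp
      qed
    qed
    then have "emeasure (LM b) {x. hh hi T q (fst x) (snd x) \<in> A - G} \<le>
        emeasure (LM b) ({x. hh lo T q (fst x) (snd x) \<in> A - G} \<union> {x. snd x j - fst x < 1 - 2*q})"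
      by (rule emeasure_mono) (intro sets.Un sets_hh_in; measurable)
    also have "\<dots> \<le> emeasure (LM b) {x. hh lo T q (fst x) (snd x) \<in> A - G} + emeasure (LM b) {x. snd x j - fst x < 1 - 2*q}"
      by (rule emeasure_subadditive) (simp add: sets_hh_in, measurable)
    also have "\<dots> \<le> emeasure (LM b) {x. hh lo T q (fst x) (snd x) \<in> A - G} + ennreal delta"
      by (intro add_left_mono bad_bound[OF eps b d quant])
    finally show ?thesis .
  next
    case False
    then have all: "\<forall>i. hi i < T" by (simp add: not_le)
    have e: "{x. hh hi T q (fst x) (snd x) \<in> A - G} = {}"
      using all by (auto simp: G_def split: option.splits)
    show ?thesis by (subst e) simp
  qed
  have one: "1 \<le> ennreal (exp eps)" using eps by simp
  have "emeasure (mu b hi T q) A \<le> emeasure (mu b hi T q) (A \<inter> G) + emeasure (mu b hi T q) (A - G)"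
    using emeasure_subadditive[of "A \<inter> G" "mu b hi T q" "A - G"] by (simp add: Int_Diff_Un)
  also have "emeasure (mu b hi T q) (A \<inter> G) \<le> ennreal (exp eps) * emeasure (mu b lo T q) (A \<inter> G)"
    by (rule dom_sum) (auto intro: good)
  also have "emeasure (mu b hi T q) (A - G) \<le> emeasure (mu b lo T q) (A - G) + ennreal delta"
    using rest by (simp add: emeasure_mu)
  also have "emeasure (mu b lo T q) (A - G) \<le> ennreal (exp eps) * emeasure (mu b lo T q) (A - G)"
    using mult_right_mono[OF one, of "emeasure (mu b lo T q) (A - G)"] by simp
  also have "ennreal (exp eps) * emeasure (mu b lo T q) (A \<inter> G) + (ennreal (exp eps) * emeasure (mu b lo T q) (A - G) + ennreal delta)
      = ennreal (exp eps) * (emeasure (mu b lo T q) (A \<inter> G) + emeasure (mu b lo T q) (A - G)) + ennreal delta"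
    by (simp add: distrib_left add.assoc)
  also have "emeasure (mu b lo T q) (A \<inter> G) + emeasure (mu b lo T q) (A - G) = emeasure (mu b lo T q) A"
    by (subst plus_emeasure) (auto simp: Int_Diff_Un)
  finally show ?thesis by (simp add: add_mono)
qed



lemma mu_prob:
  assumes b: "b > 0"
  shows "prob_space (mu b v T q)"
  unfolding mu_def by (rule prob_space.prob_space_distr[OF LM_prob[OF b]]) simp

lemma conv:
  assumes b: "b > 0"
    and h: "emeasure (mu b v1 T q) S \<le> ennreal (exp eps) * emeasure (mu b v2 T q) S + ennreal delta"
    and d: "0 < delta"
  shows "measure (mu b v1 T q) S \<le> exp eps * measure (mu b v2 T q) S + delta"
proof -
  interpret P1: prob_space "mu b v1 T q" by (rule mu_prob[OF b])
  interpret P2: prob_space "mu b v2 T q" by (rule mu_prob[OF b])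
  have "ennreal (measure (mu b v1 T q) S) \<le> ennreal (exp eps) * ennreal (measure (mu b v2 T q) S) + ennreal delta"
    using h by (simp add: P1.emeasure_eq_measure P2.emeasure_eq_measure)
  also have "\<dots> = ennreal (exp eps * measure (mu b v2 T q) S + delta)"
    using d by (simp add: ennreal_mult ennreal_plus)
  finally show ?thesis
    using d by (subst (asm) ennreal_le_iff) auto
qed

theorem theorem4p2:
  fixes eps delta T q :: real
    and f :: "nat \<Rightarrow> 'd \<Rightarrow> real"
    and nbr :: "'d \<Rightarrow> 'd \<Rightarrow> bool"
  assumes eps_pos: "eps > 0"
    and delta: "0 < delta" "delta < 1"
    and sens: "\<And>i D D'. nbr D D' \<Longrightarrow> \<bar>f i D - f i D'\<bar> \<le> 1"
    and unidir: "\<And>D D'. nbr D D' \<Longrightarrow> (\<exists>i. f i D > f i D') \<Longrightarrow> \<not> (\<exists>j. f j D < f j D')"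
    and quantile: "measure (laplace (2 / eps)) {..q} = 1 - delta / (2 * (1 + exp eps))"
  shows "diff_private eps delta nbr (strict_uds_above_threshold eps f T q)"
proof -
  define b where "b = 2 / eps"
  have b0: "b > 0" using eps_pos by (simp add: b_def)
  have quant: "measure (laplace b) {..q} = 1 - delta/(2*(1+exp eps))"
    using quantile by (simp add: b_def)
  have eq: "strict_uds_above_threshold eps f T q D = mu b (\<lambda>i. f i D) T q" for D
    unfolding strict_uds_above_threshold_def mu_def b_def
    by (simp add: strict_uds_halt_hh split_beta')
  show ?thesis
    unfolding diff_private_def
  proof (intro allI impI conjI ballI)
    fix D D' assume nb: "nbr D D'"
    have ord: "(\<forall>i. f i D \<le> f i D') \<or> (\<forall>i. f i D' \<le> f i D)"
      using unidir[OF nb] by (meson not_le)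
    have s1: "f i D' \<le> f i D + 1" and s2: "f i D \<le> f i D' + 1" for i
      using sens[OF nb, of i] by (auto simp: abs_le_iff)
    fix S
    show "measure (strict_uds_above_threshold eps f T q D) S
        \<le> exp eps * measure (strict_uds_above_threshold eps f T q D') S + delta"
    proof (cases "\<forall>i. f i D \<le> f i D'")
      case True
      show ?thesis unfolding eq
        by (rule conv[OF b0 core1[OF eps_pos b_def delta(1) quant] delta(1)]) (use True s1 in auto)
    next
      case False
      with ord have o2: "\<forall>i. f i D' \<le> f i D" by simp
      show ?thesis unfolding eq
        by (rule conv[OF b0 core2[OF eps_pos b_def delta(1) quant] delta(1)]) (use o2 s2 in auto)
    qed
    show "measure (strict_uds_above_threshold eps f T q D') S
        \<le> exp eps * measure (strict_uds_above_threshold eps f T q D) S + delta"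
    proof (cases "\<forall>i. f i D \<le> f i D'")
      case True
      show ?thesis unfolding eq
        by (rule conv[OF b0 core2[OF eps_pos b_def delta(1) quant] delta(1)]) (use True s1 in auto)
    next
      case False
      with ord have o2: "\<forall>i. f i D' \<le> f i D" by simp
      show ?thesis unfolding eq
        by (rule conv[OF b0 core1[OF eps_pos b_def delta(1) quant] delta(1)]) (use o2 s2 in auto)
    qed
  qed
qed

end
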